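(* Let $n \geq 12$ and let $\Gamma_n$ be the group with presentation $$\Gamma_n = \langle s, x \mid [s^n, x] = 1,\ [x, s^i x s^{-i}] = 1 \text{ for } 1 \leq i \leq n-1 \rangle.$$ Let $S_1 = \{s, x\}$, $S_2 = \{s^{-1}, x\}$, $S_3 = \{s, x^{-1}\}$, $S_4 = \{s^{-1}, x^{-1}\}$. Then there exist elements $f_1, f_2, f_3, f_4, g_1, g_2, g_3, g_4 \in \Gamma_n$ such that: (i) $\langle f_1, f_2, f_3, f_4 \rangle \cong \langle g_1, g_2, g_3, g_4 \rangle \cong \mathbb{Z}^4$; (ii) each of $f_1, f_2, f_3, f_4$ can be represented by a positive word in the alphabet $S_1$; (iii) for every $1 \leq i \leq 4$, the element $g_i$ can be represented by a positive word in the alphabet $S_i$.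
   Context: $[a,b]$ denotes the commutator of $a$ and $b$. Let $G$ be a group and $S \subseteq G \setminus \{1\}$ a subset such that $x \in S$ implies $x^{-1} \notin S$. A non-trivial reduced word $W = y_1^{m_1} \cdots y_k^{m_k}$ is a positive word in the alphabet $S$ if $y_1, \dots, y_k \in S$ and all exponents $m_1, \dots, m_k$ are positive integers. An element is represented by such a word if it equals the product in $G$. *)

theory Defs
  imports "HOL-Algebra.Algebra"
begin

datatype gen = GS | GX

text \<open>A letter is a generator together with a flag: True means the inverse generator.\<close>
type_synonym letter = "gen \<times> bool"
type_synonym word = "letter list"

definition inv_letter :: "letter \<Rightarrow> letter" where
  "inv_letter a = (fst a, \<not> snd a)"

definition inv_word :: "word \<Rightarrow> word" where
  "inv_word w = rev (map inv_letter w)"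

definition comm_word :: "word \<Rightarrow> word \<Rightarrow> word" where
  "comm_word a b = a @ b @ inv_word a @ inv_word b"

definition pow_word :: "word \<Rightarrow> nat \<Rightarrow> word" where
  "pow_word w k = concat (replicate k w)"

definition s_word :: word where "s_word = [(GS, False)]"
definition x_word :: word where "x_word = [(GX, False)]"

definition rels :: "nat \<Rightarrow> word set" where
  "rels n = {comm_word (pow_word s_word n) x_word} \<union>
     {comm_word x_word (pow_word s_word i @ x_word @ inv_word (pow_word s_word i)) | i.
        1 \<le> i \<and> i \<le> n - 1}"

inductive word_eqv :: "word set \<Rightarrow> word \<Rightarrow> word \<Rightarrow> bool" for R where
  refl: "word_eqv R u u"
| sym: "word_eqv R u v \<Longrightarrow> word_eqv R v u"
| trans: "word_eqv R u v \<Longrightarrow> word_eqv R v w \<Longrightarrow> word_eqv R u w"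
| cancel: "word_eqv R (u @ [a, inv_letter a] @ v) (u @ v)"
| relator: "r \<in> R \<Longrightarrow> word_eqv R (u @ r @ v) (u @ v)"

definition word_rel :: "word set \<Rightarrow> (word \<times> word) set" where
  "word_rel R = {(u, v). word_eqv R u v}"

definition presented_group :: "word set \<Rightarrow> word set monoid" where
  "presented_group R =
     \<lparr> carrier = UNIV // word_rel R,
       monoid.mult = (\<lambda>A B. word_rel R `` {a @ b | a b. a \<in> A \<and> b \<in> B}),
       one = word_rel R `` {[]} \<rparr>"

definition Gamma :: "nat \<Rightarrow> word set monoid" where
  "Gamma n = presented_group (rels n)"

definition gen_s :: "nat \<Rightarrow> word set" where "gen_s n = word_rel (rels n) `` {s_word}"
definition gen_x :: "nat \<Rightarrow> word set" where "gen_x n = word_rel (rels n) `` {x_word}"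

text \<open>g is represented by a non-trivial reduced word y_1^m_1 ... y_k^m_k with
  all y_i in S (consecutive letters distinct) and all m_i positive.\<close>
definition pos_word_rep :: "('a, 'b) monoid_scheme \<Rightarrow> 'a set \<Rightarrow> 'a \<Rightarrow> bool" where
  "pos_word_rep G S g \<longleftrightarrow>
     (\<exists>ys ms. length ys = length ms \<and> ys \<noteq> [] \<and> set ys \<subseteq> S
        \<and> (\<forall>i. Suc i < length ys \<longrightarrow> ys ! i \<noteq> ys ! Suc i)
        \<and> (\<forall>m \<in> set ms. (0::nat) < m)
        \<and> g = foldr (\<lambda>(y, m) acc. (y [^]\<^bsub>G\<^esub> m) \<otimes>\<^bsub>G\<^esub> acc) (zip ys ms) \<one>\<^bsub>G\<^esub>)"

abbreviation Z4 :: "(int \<times> int \<times> int \<times> int) monoid" where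
  "Z4 \<equiv> integer_group \<times>\<times> integer_group \<times>\<times> integer_group \<times>\<times> integer_group"

end

theory Submission
  imports Defs
begin


lemma eqv_app: "word_eqv R u v \<Longrightarrow> word_eqv R (p @ u @ q) (p @ v @ q)"
proof (induction rule: word_eqv.induct)
  case (refl u) then show ?case by (rule word_eqv.refl)
next
  case (sym u v) then show ?case by (blast intro: word_eqv.sym)
next
  case (trans u v w) then show ?case by (blast intro: word_eqv.trans[of R "p @ u @ q" "p @ v @ q" "p @ w @ q"])
next
  case (cancel u a v) then show ?case using word_eqv.cancel[of R "p @ u" a "v @ q"] by simp
next
  case (relator r u v) then show ?case using word_eqv.relator[of r R "p @ u" "v @ q"] by simp
qed

lemma eqv_mult: "word_eqv R u u' \<Longrightarrow> word_eqv R v v' \<Longrightarrow> word_eqv R (u @ v) (u' @ v')"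
proof -
  assume a: "word_eqv R u u'" and b: "word_eqv R v v'"
  have 1: "word_eqv R (u @ v) (u' @ v)" using eqv_app[OF a, of "[]" v] by simp
  have 2: "word_eqv R (u' @ v) (u' @ v')" using eqv_app[OF b, of u' "[]"] by simp
  show ?thesis by (rule word_eqv.trans[OF 1 2])
qed

lemma inv_letter_inv [simp]: "inv_letter (inv_letter a) = a"
  by (simp add: inv_letter_def)

lemma inv_word_inv [simp]: "inv_word (inv_word w) = w"
  by (simp add: inv_word_def rev_map comp_def)

lemma inv_word_Cons: "inv_word (a # w) = inv_word w @ [inv_letter a]"
  by (simp add: inv_word_def)

lemma inv_word_append: "inv_word (u @ v) = inv_word v @ inv_word u"
  by (simp add: inv_word_def)

lemma inv_cancel: "word_eqv R (w @ inv_word w) []"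
proof (induction w)
  case Nil then show ?case by (simp add: inv_word_def word_eqv.refl)
next
  case (Cons a w)
  have "word_eqv R ([a] @ (w @ inv_word w) @ [inv_letter a]) ([a] @ [] @ [inv_letter a])"
    using eqv_app[OF Cons] .
  moreover have "word_eqv R ([] @ [a, inv_letter a] @ []) ([] @ [])"
    by (rule word_eqv.cancel)
  ultimately show ?case by (simp add: inv_word_Cons) (rule word_eqv.trans)
qed

lemma inv_cancel2: "word_eqv R (inv_word w @ w) []"
  using inv_cancel[of R "inv_word w"] by simp

definition cls :: "word set \<Rightarrow> word \<Rightarrow> word set" where
  "cls R w = word_rel R `` {w}"

lemma equiv_rel: "equiv UNIV (word_rel R)"
  unfolding word_rel_def
proof (rule equivI)
  show "refl_on UNIV {(u, v). word_eqv R u v}" by (auto simp: refl_on_def word_eqv.refl)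
  show "sym {(u, v). word_eqv R u v}" unfolding sym_def by (simp add: word_eqv.sym)
  show "trans {(u, v). word_eqv R u v}" unfolding trans_def
    by (clarsimp, rule word_eqv.trans, assumption+)
qed auto

lemma cls_eq_iff: "cls R u = cls R v \<longleftrightarrow> word_eqv R u v"
  using eq_equiv_class_iff[OF equiv_rel, of u v R] by (simp add: cls_def word_rel_def)

lemma in_cls: "w \<in> cls R w"
  by (simp add: cls_def word_rel_def word_eqv.refl)

lemma mem_cls: "v \<in> cls R w \<longleftrightarrow> word_eqv R w v"
  by (simp add: cls_def word_rel_def)

lemma carrier_pg: "carrier (presented_group R) = range (cls R)"
  by (auto simp: presented_group_def quotient_def cls_def)

lemma cls_in [simp]: "cls R w \<in> carrier (presented_group R)"
  by (simp add: carrier_pg)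

lemma mult_cls: "cls R u \<otimes>\<^bsub>presented_group R\<^esub> cls R v = cls R (u @ v)"
proof -
  have "word_rel R `` {a @ b | a b. a \<in> cls R u \<and> b \<in> cls R v} = cls R (u @ v)"
  proof
    show "word_rel R `` {a @ b | a b. a \<in> cls R u \<and> b \<in> cls R v} \<subseteq> cls R (u @ v)"
    proof
      fix z assume "z \<in> word_rel R `` {a @ b | a b. a \<in> cls R u \<and> b \<in> cls R v}"
      then obtain a b where "a \<in> cls R u" "b \<in> cls R v" "word_eqv R (a @ b) z"
        by (auto simp: word_rel_def)
      then have "word_eqv R (u @ v) (a @ b)" by (simp add: mem_cls eqv_mult)
      then show "z \<in> cls R (u @ v)"
        using \<open>word_eqv R (a @ b) z\<close> by (simp add: mem_cls) (rule word_eqv.trans)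
    qed
  next
    show "cls R (u @ v) \<subseteq> word_rel R `` {a @ b | a b. a \<in> cls R u \<and> b \<in> cls R v}"
      using in_cls[of u R] in_cls[of v R] by (auto simp: cls_def)
  qed
  then show ?thesis by (simp add: presented_group_def)
qed

lemma one_pg: "\<one>\<^bsub>presented_group R\<^esub> = cls R []"
  by (simp add: presented_group_def cls_def)

lemma group_pg: "group (presented_group R)"
proof (rule groupI)
  fix x y assume "x \<in> carrier (presented_group R)" "y \<in> carrier (presented_group R)"
  then show "x \<otimes>\<^bsub>presented_group R\<^esub> y \<in> carrier (presented_group R)"
    by (auto simp: carrier_pg mult_cls)
next
  show "\<one>\<^bsub>presented_group R\<^esub> \<in> carrier (presented_group R)" by (simp add: one_pg)
next
  fix x y z assume "x \<in> carrier (presented_group R)" "y \<in> carrier (presented_group R)"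
    "z \<in> carrier (presented_group R)"
  then show "x \<otimes>\<^bsub>presented_group R\<^esub> y \<otimes>\<^bsub>presented_group R\<^esub> z =
      x \<otimes>\<^bsub>presented_group R\<^esub> (y \<otimes>\<^bsub>presented_group R\<^esub> z)"
    by (auto simp: carrier_pg mult_cls)
next
  fix x assume "x \<in> carrier (presented_group R)"
  then show "\<one>\<^bsub>presented_group R\<^esub> \<otimes>\<^bsub>presented_group R\<^esub> x = x"
    by (auto simp: carrier_pg mult_cls one_pg)
next
  fix x assume "x \<in> carrier (presented_group R)"
  then obtain w where w: "x = cls R w" by (auto simp: carrier_pg)
  have "cls R (inv_word w) \<otimes>\<^bsub>presented_group R\<^esub> x = \<one>\<^bsub>presented_group R\<^esub>"
  proof -
    have "cls R (inv_word w) \<otimes>\<^bsub>presented_group R\<^esub> x = cls R (inv_word w @ w)"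
      unfolding w by (rule mult_cls)
    also have "\<dots> = cls R []" unfolding cls_eq_iff by (rule inv_cancel2)
    finally show ?thesis unfolding one_pg .
  qed
  then show "\<exists>y\<in>carrier (presented_group R). y \<otimes>\<^bsub>presented_group R\<^esub> x = \<one>\<^bsub>presented_group R\<^esub>"
    by (rule bexI[OF _ cls_in])
qed

lemma inv_cls: "inv\<^bsub>presented_group R\<^esub> (cls R w) = cls R (inv_word w)"
proof (rule group.inv_equality[OF group_pg])
  show "cls R (inv_word w) \<otimes>\<^bsub>presented_group R\<^esub> cls R w = \<one>\<^bsub>presented_group R\<^esub>"
    unfolding mult_cls one_pg cls_eq_iff by (rule inv_cancel2)
qed simp_all

lemma pow_cls: "cls R w [^]\<^bsub>presented_group R\<^esub> (k::nat) = cls R (pow_word w k)"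
proof (induction k)
  case 0 then show ?case by (simp add: pow_word_def one_pg)
next
  case (Suc k)
  have "cls R w [^]\<^bsub>presented_group R\<^esub> Suc k = cls R w \<otimes>\<^bsub>presented_group R\<^esub> cls R w [^]\<^bsub>presented_group R\<^esub> k"
    using monoid.nat_pow_Suc2[OF group.is_monoid[OF group_pg]] by simp
  then show ?case by (simp add: Suc mult_cls pow_word_def)
qed

lemma rel_cls: "r \<in> R \<Longrightarrow> cls R r = \<one>\<^bsub>presented_group R\<^esub>"
  using word_eqv.relator[of r R "[]" "[]"] by (simp add: one_pg cls_eq_iff)



type_synonym hel = "(int \<Rightarrow> int) \<times> int"

definition hm :: "hel \<Rightarrow> hel \<Rightarrow> hel" where
  "hm p q = (\<lambda>j. fst p j + fst q (j - snd p), snd p + snd q)"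
definition he :: hel where "he = (\<lambda>_. 0, 0)"
definition hinv :: "hel \<Rightarrow> hel" where
  "hinv p = (\<lambda>j. - fst p (j + snd p), - snd p)"
definition Xf :: "nat \<Rightarrow> int \<Rightarrow> int" where
  "Xf n j = (if int n dvd j then 1 else 0)"
definition lv :: "nat \<Rightarrow> letter \<Rightarrow> hel" where
  "lv n a = (case a of (GS, False) \<Rightarrow> (\<lambda>_. 0, 1) | (GS, True) \<Rightarrow> (\<lambda>_. 0, -1)
     | (GX, False) \<Rightarrow> (Xf n, 0) | (GX, True) \<Rightarrow> (\<lambda>j. - Xf n j, 0))"
definition ev :: "nat \<Rightarrow> word \<Rightarrow> hel" where
  "ev n w = foldr (\<lambda>a acc. hm (lv n a) acc) w he"

lemma hm_assoc: "hm (hm p q) r = hm p (hm q r)"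
  by (simp add: hm_def algebra_simps)

lemma hm_he [simp]: "hm he p = p" "hm p he = p"
  by (simp_all add: hm_def he_def)

lemma ev_Nil [simp]: "ev n [] = he" by (simp add: ev_def)
lemma ev_Cons: "ev n (a # w) = hm (lv n a) (ev n w)" by (simp add: ev_def)

lemma ev_append: "ev n (u @ v) = hm (ev n u) (ev n v)"
  by (induction u) (simp_all add: ev_Cons hm_assoc)

lemma hinv_hm: "hinv (hm p q) = hm (hinv q) (hinv p)"
  by (simp add: hm_def hinv_def algebra_simps)

lemma hinv_he [simp]: "hinv he = he" by (simp add: hinv_def he_def)

lemma lv_inv: "lv n (inv_letter a) = hinv (lv n a)"
  by (cases a) (auto simp: lv_def inv_letter_def hinv_def split: gen.splits bool.splits)

lemma ev_inv: "ev n (inv_word w) = hinv (ev n w)"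
  by (induction w) (simp_all add: inv_word_Cons ev_append ev_Cons lv_inv hinv_hm, simp add: inv_word_def)

lemma hm_hinv: "hm p (hinv p) = he"
  by (simp add: hm_def hinv_def he_def)

definition good :: "nat \<Rightarrow> hel \<Rightarrow> bool" where
  "good n p \<longleftrightarrow> (\<forall>j. fst p j = fst p (j mod int n)) \<and> int n dvd snd p"

lemma good_shift: "good n q \<Longrightarrow> int n dvd k \<Longrightarrow> fst q (j - k) = fst q j"
  unfolding good_def by (metis mod_diff_right_eq dvd_eq_mod_eq_0 diff_zero)

lemma good_hm: "good n p \<Longrightarrow> good n q \<Longrightarrow> hm p q = (\<lambda>j. fst p j + fst q j, snd p + snd q)"
  using good_shift[of n q "snd p"] by (simp add: hm_def good_def)

lemma good_hm_good: assumes "good n p" "good n q" shows "good n (hm p q)"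
proof -
  from assms have p: "\<And>j. fst p j = fst p (j mod int n)" "int n dvd snd p"
    and q: "\<And>j. fst q j = fst q (j mod int n)" "int n dvd snd q" by (auto simp: good_def)
  show ?thesis unfolding good_hm[OF assms] good_def fst_conv snd_conv
  proof (intro conjI allI)
    fix j show "fst p j + fst q j = fst p (j mod int n) + fst q (j mod int n)" using p(1) q(1) by metis
  next
    show "int n dvd snd p + snd q" using p(2) q(2) by (rule dvd_add)
  qed
qed

lemma good_hinv: "good n p \<Longrightarrow> hinv p = (\<lambda>j. - fst p j, - snd p)"
  using good_shift[of n p "- snd p"] by (simp add: hinv_def good_def)

lemma good_hinv_good: assumes "good n p" shows "good n (hinv p)"
proof -
  from assms have p: "\<And>j. fst p j = fst p (j mod int n)" "int n dvd snd p"
    by (auto simp: good_def)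
  show ?thesis unfolding good_hinv[OF assms] good_def fst_conv snd_conv
  proof (intro conjI allI)
    fix j show "- fst p j = - fst p (j mod int n)" using p(1) by metis
  next
    show "int n dvd - snd p" using p(2) by simp
  qed
qed

lemma Xf_mod: "Xf n (j mod int n) = Xf n j"
  by (simp add: Xf_def dvd_mod_iff)

lemma good_X: "good n (Xf n, 0)"
  by (simp add: good_def Xf_mod)

lemma ev_s: "ev n s_word = (\<lambda>_. 0, 1)"
  by (simp add: s_word_def ev_Cons lv_def)
lemma ev_x: "ev n x_word = (Xf n, 0)"
  by (simp add: x_word_def ev_Cons lv_def)

lemma ev_pow_s: "ev n (pow_word s_word k) = (\<lambda>_. 0, int k)"
proof (induction k)
  case 0 then show ?case by (simp add: pow_word_def he_def)
next
  case (Suc k)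
  have "pow_word s_word (Suc k) = s_word @ pow_word s_word k" by (simp add: pow_word_def)
  then show ?case by (simp add: ev_append Suc ev_s hm_def)
qed

lemma hcomm: assumes p: "good n p" and q: "good n q"
  shows "hm p (hm q (hm (hinv p) (hinv q))) = he"
proof -
  have gr: "good n (hm (hinv p) (hinv q))" by (intro good_hm_good good_hinv_good p q)
  have r: "hm (hinv p) (hinv q) = (\<lambda>j. - fst p j - fst q j, - snd p - snd q)"
    using good_hm[OF good_hinv_good[OF p] good_hinv_good[OF q]] by (simp add: good_hinv[OF p] good_hinv[OF q])
  have gr2: "good n (hm q (hm (hinv p) (hinv q)))" by (intro good_hm_good gr q)
  have r2: "hm q (hm (hinv p) (hinv q)) = (\<lambda>j. - fst p j, - snd p)"
    using good_hm[OF q gr] by (simp add: r)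
  show ?thesis using good_hm[OF p gr2] by (simp add: r2 he_def)
qed

lemma ev_comm_good: "good n (ev n a) \<Longrightarrow> good n (ev n b) \<Longrightarrow> ev n (comm_word a b) = he"
  by (simp add: comm_word_def ev_append ev_inv hcomm)

lemma ev_rels: "r \<in> rels n \<Longrightarrow> ev n r = he"
proof -
  assume "r \<in> rels n"
  then consider "r = comm_word (pow_word s_word n) x_word"
    | i where "r = comm_word x_word (pow_word s_word i @ x_word @ inv_word (pow_word s_word i))"
    unfolding rels_def by blast
  then show ?thesis
  proof cases
    case 1
    have "good n (ev n (pow_word s_word n))" by (simp add: ev_pow_s good_def)
    then show ?thesis using 1 ev_comm_good good_X ev_x by metis
  next
    case (2 i)
    have e: "ev n (pow_word s_word i @ x_word @ inv_word (pow_word s_word i)) = (\<lambda>j. Xf n (j - int i), 0)"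
      by (simp add: ev_append ev_inv ev_pow_s ev_x hm_def hinv_def)
    have "good n (\<lambda>j. Xf n (j - int i), 0)"
      unfolding good_def fst_conv snd_conv by (simp add: Xf_def dvd_eq_mod_eq_0 mod_diff_left_eq)
    then show ?thesis using 2 e ev_comm_good good_X ev_x by metis
  qed
qed

lemma ev_eqv: "word_eqv (rels n) u v \<Longrightarrow> ev n u = ev n v"
proof (induction rule: word_eqv.induct)
  case (cancel u a v)
  have "hm (lv n a) (lv n (inv_letter a)) = he" by (simp add: lv_inv hm_hinv)
  then show ?case by (simp add: ev_append ev_Cons hm_assoc[symmetric])
next
  case (relator r u v)
  then show ?case by (simp add: ev_append ev_rels)
qed simp_all



lemma (in group) inv_cancel_l [simp]:
  "x \<in> carrier G \<Longrightarrow> y \<in> carrier G \<Longrightarrow> inv x \<otimes> (x \<otimes> y) = y"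
  "x \<in> carrier G \<Longrightarrow> y \<in> carrier G \<Longrightarrow> x \<otimes> (inv x \<otimes> y) = y"
  by (simp_all add: m_assoc[symmetric])

lemma (in group) comm_from:
  assumes a: "a \<in> carrier G" and b: "b \<in> carrier G" and e: "a \<otimes> (b \<otimes> (inv a \<otimes> inv b)) = \<one>"
  shows "a \<otimes> b = b \<otimes> a"
proof -
  have "a \<otimes> b = (a \<otimes> (b \<otimes> (inv a \<otimes> inv b))) \<otimes> (b \<otimes> a)"
    using a b by (simp add: m_assoc)
  then show ?thesis using e a b by simp
qed

lemma (in group) comm_inv:
  assumes a: "a \<in> carrier G" and b: "b \<in> carrier G" and e: "a \<otimes> b = b \<otimes> a"
  shows "a \<otimes> inv b = inv b \<otimes> a"
proof -
  have "a \<otimes> inv b = inv b \<otimes> (b \<otimes> a) \<otimes> inv b" using a b by (simp add: m_assoc)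
  also have "\<dots> = inv b \<otimes> (a \<otimes> b) \<otimes> inv b" by (simp add: e)
  also have "\<dots> = inv b \<otimes> a" using a b by (simp add: m_assoc)
  finally show ?thesis .
qed

lemma (in group) comm_inv2:
  assumes a: "a \<in> carrier G" and b: "b \<in> carrier G" and e: "a \<otimes> b = b \<otimes> a"
  shows "inv a \<otimes> b = b \<otimes> inv a"
  using comm_inv[OF b a e[symmetric]] by simp

lemma (in group) comm_mult:
  assumes a: "a \<in> carrier G" and b: "b \<in> carrier G" and d: "d \<in> carrier G"
    and e1: "a \<otimes> b = b \<otimes> a" and e2: "a \<otimes> d = d \<otimes> a"
  shows "a \<otimes> (b \<otimes> d) = (b \<otimes> d) \<otimes> a"
proof -
  have "a \<otimes> (b \<otimes> d) = (a \<otimes> b) \<otimes> d" using a b d by (simp add: m_assoc)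
  also have "\<dots> = b \<otimes> (a \<otimes> d)" using a b d by (simp add: e1 m_assoc)
  also have "\<dots> = (b \<otimes> d) \<otimes> a" using a b d by (simp add: e2 m_assoc)
  finally show ?thesis .
qed

lemma (in group) comm_int_pow:
  assumes a: "a \<in> carrier G" and b: "b \<in> carrier G" and e: "a \<otimes> b = b \<otimes> a"
  shows "a [^] (k::int) \<otimes> b = b \<otimes> a [^] k"
proof (cases "k < 0")
  case True
  have "a [^] nat (- k) \<otimes> b = b \<otimes> a [^] nat (- k)" by (rule group_commutes_pow[OF e a b])
  then have "inv (a [^] nat (- k)) \<otimes> b = b \<otimes> inv (a [^] nat (- k))"
    using a b by (intro comm_inv2) simp_all
  moreover have "a [^] k = inv (a [^] nat (- k))" using True by (subst int_pow_def2) simp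
  ultimately show ?thesis by simp
next
  case False
  have "a [^] nat k \<otimes> b = b \<otimes> a [^] nat k" by (rule group_commutes_pow[OF e a b])
  moreover have "a [^] k = a [^] nat k" using False by (subst int_pow_def2) simp
  ultimately show ?thesis by simp
qed

lemma (in group) conj_mult:
  assumes g: "g \<in> carrier G" and a: "a \<in> carrier G" and b: "b \<in> carrier G"
  shows "(g \<otimes> a \<otimes> inv g) \<otimes> (g \<otimes> b \<otimes> inv g) = g \<otimes> (a \<otimes> b) \<otimes> inv g"
  using g a b by (simp add: m_assoc)

lemma (in group) conj_inv:
  assumes g: "g \<in> carrier G" and a: "a \<in> carrier G"
  shows "inv (g \<otimes> a \<otimes> inv g) = g \<otimes> inv a \<otimes> inv g"
  using g a by (simp add: inv_mult_group m_assoc)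

lemma (in group) shift_lemma:
  assumes s: "s \<in> carrier G" and y: "y \<in> carrier G"
  shows "s [^] (k::int) \<otimes> (y \<otimes> s [^] (m - k)) = (s [^] k \<otimes> y \<otimes> inv (s [^] k)) \<otimes> s [^] m"
proof -
  have "s [^] (m - k) = inv (s [^] k) \<otimes> s [^] m"
    using int_pow_mult[OF s, of "-k" m] int_pow_neg[OF s, of k] by simp
  then show ?thesis using s y by (simp add: m_assoc)
qed

lemma (in group) generate_comm:
  assumes F: "F \<subseteq> carrier G" and c: "\<And>a b. a \<in> F \<Longrightarrow> b \<in> F \<Longrightarrow> a \<otimes> b = b \<otimes> a"
    and x: "x \<in> generate G F" and y: "y \<in> generate G F"
  shows "x \<otimes> y = y \<otimes> x"
proof -
  have gc: "\<And>z. z \<in> generate G F \<Longrightarrow> z \<in> carrier G" using generate_in_carrier[OF F] by blast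
  have step1: "\<And>a z. a \<in> F \<Longrightarrow> z \<in> generate G F \<Longrightarrow> a \<otimes> z = z \<otimes> a"
  proof -
    fix a z assume a: "a \<in> F" and z: "z \<in> generate G F"
    have ac: "a \<in> carrier G" using a F by blast
    from z show "a \<otimes> z = z \<otimes> a"
    proof (induction rule: generate.induct)
      case one then show ?case using ac by simp
    next
      case (incl h) then show ?case using a c by blast
    next
      case (inv h) then show ?case using ac F c[OF a] comm_inv[OF ac, of h] by blast
    next
      case (eng h1 h2) then show ?case using ac gc comm_mult by blast
    qed
  qed
  from x have "\<forall>y \<in> generate G F. x \<otimes> y = y \<otimes> x"
  proof (induction rule: generate.induct)
    case one then show ?case using gc by simp
  next
    case (incl h) then show ?case using step1 by blast
  next
    case (inv h) then show ?case using F gc step1 comm_inv2 by (metis subsetD)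
  next
    case (eng h1 h2)
    show ?case
    proof
      fix y assume yy: "y \<in> generate G F"
      have "h1 \<otimes> h2 \<otimes> y = h1 \<otimes> (h2 \<otimes> y)" using eng.hyps yy gc by (simp add: m_assoc)
      also have "\<dots> = h1 \<otimes> (y \<otimes> h2)" using eng.IH(2) yy by simp
      also have "\<dots> = (h1 \<otimes> y) \<otimes> h2" using eng.hyps yy gc by (simp add: m_assoc)
      also have "\<dots> = (y \<otimes> h1) \<otimes> h2" using eng.IH(1) yy by simp
      also have "\<dots> = y \<otimes> (h1 \<otimes> h2)" using eng.hyps yy gc by (simp add: m_assoc)
      finally show "h1 \<otimes> h2 \<otimes> y = y \<otimes> (h1 \<otimes> h2)" .
    qed
  qed
  then show ?thesis using y by blast
qed



lemma in_rangeI: "f x = y \<Longrightarrow> y \<in> range f" by blast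

lemma group_Z4: "group Z4"
  by (intro DirProd_group group_integer_group)

lemma carrier_Z4: "carrier Z4 = UNIV" by simp

lemma (in comm_group) Z4_iso:
  fixes h1 h2 h3 h4
  assumes h: "h1 \<in> carrier G" "h2 \<in> carrier G" "h3 \<in> carrier G" "h4 \<in> carrier G"
    and gen: "carrier G \<subseteq> generate G {h1, h2, h3, h4}"
    and inj: "\<And>a b c d a' b' c' d'. h1 [^] (a::int) \<otimes> h2 [^] (b::int) \<otimes> h3 [^] (c::int) \<otimes> h4 [^] (d::int)
        = h1 [^] a' \<otimes> h2 [^] b' \<otimes> h3 [^] c' \<otimes> h4 [^] d' \<Longrightarrow> a = a' \<and> b = b' \<and> c = c' \<and> d = d'"
  shows "G \<cong> Z4"
proof -
  define \<phi> :: "int \<times> int \<times> int \<times> int \<Rightarrow> 'a" where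
    "\<phi> = (\<lambda>(a, b, c, d). h1 [^] a \<otimes> h2 [^] b \<otimes> h3 [^] c \<otimes> h4 [^] d)"
  have \<phi>c: "\<phi> p \<in> carrier G" for p using h by (cases p) (simp add: \<phi>_def)
  have \<phi>add: "\<phi> (a + a', b + b', c + c', d + d') = \<phi> (a, b, c, d) \<otimes> \<phi> (a', b', c', d')" for a b c d a' b' c' d'
    using h by (simp add: \<phi>_def int_pow_mult m_ac)
  have \<phi>neg: "\<phi> (- a, - b, - c, - d) = inv (\<phi> (a, b, c, d))" for a b c d
    using h by (simp add: \<phi>_def int_pow_neg inv_mult m_ac)
  have hom: "\<phi> \<in> hom Z4 G"
  proof (rule homI)
    fix p q :: "int \<times> int \<times> int \<times> int"
    obtain a b c d where p: "p = (a, b, c, d)" by (cases p) auto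
    obtain a' b' c' d' where q: "q = (a', b', c', d')" by (cases q) auto
    show "\<phi> (p \<otimes>\<^bsub>Z4\<^esub> q) = \<phi> p \<otimes> \<phi> q" unfolding p q by (simp add: \<phi>add)
  qed (rule \<phi>c)
  have surj: "carrier G \<subseteq> range \<phi>"
  proof
    fix y assume "y \<in> carrier G"
    then have "y \<in> generate G {h1, h2, h3, h4}" using gen by blast
    then show "y \<in> range \<phi>"
    proof (induction rule: generate.induct)
      case one
      have "\<phi> (0, 0, 0, 0) = \<one>" by (simp add: \<phi>_def)
      then show ?case by (rule in_rangeI)
    next
      case (incl g)
      have "\<phi> (1, 0, 0, 0) = h1" "\<phi> (0, 1, 0, 0) = h2" "\<phi> (0, 0, 1, 0) = h3" "\<phi> (0, 0, 0, 1) = h4"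
        using h by (simp_all add: \<phi>_def)
      then have "{h1, h2, h3, h4} \<subseteq> range \<phi>" using in_rangeI[of \<phi>] by blast
      then show ?case using incl by blast
    next
      case (inv g)
      have "\<phi> (-1, 0, 0, 0) = inv h1" "\<phi> (0, -1, 0, 0) = inv h2" "\<phi> (0, 0, -1, 0) = inv h3" "\<phi> (0, 0, 0, -1) = inv h4"
        using h by (simp_all add: \<phi>_def int_pow_neg)
      then have "{inv h1, inv h2, inv h3, inv h4} \<subseteq> range \<phi>" using in_rangeI[of \<phi>] by blast
      then show ?case using inv by blast
    next
      case (eng g1 g2)
      obtain a b c d where 1: "g1 = \<phi> (a, b, c, d)" using eng.IH(1) by (auto simp: image_def)
      obtain a' b' c' d' where 2: "g2 = \<phi> (a', b', c', d')" using eng.IH(2) by (auto simp: image_def)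
      have "g1 \<otimes> g2 = \<phi> (a + a', b + b', c + c', d + d')" by (simp add: 1 2 \<phi>add)
      then show ?case by (rule in_rangeI[OF HOL.sym])
    qed
  qed
  have injf: "inj_on \<phi> (carrier Z4)"
  proof (rule inj_onI)
    fix p q assume e: "\<phi> p = \<phi> q"
    obtain a b c d where p: "p = (a, b, c, d)" by (cases p) auto
    obtain a' b' c' d' where q: "q = (a', b', c', d')" by (cases q) auto
    show "p = q" using inj[of a b c d a' b' c' d'] e unfolding p q \<phi>_def by simp
  qed
  have "\<phi> \<in> iso Z4 G"
    unfolding iso_iff using hom injf surj \<phi>c by auto
  then have "Z4 \<cong> G" by (rule is_isoI)
  then show ?thesis by (rule group.iso_sym[OF group_Z4])
qed



locale gam =
  fixes n :: nat
  assumes n12: "12 \<le> n"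
begin

abbreviation "G \<equiv> Gamma n"
abbreviation "cl \<equiv> cls (rels n)"

lemma grp: "group G" unfolding Gamma_def by (rule group_pg)

sublocale G: group G by (rule grp)

lemma carrierG: "carrier G = range cl" by (simp add: Gamma_def carrier_pg)
lemma cl_in [simp]: "cl w \<in> carrier G" by (simp add: carrierG)
lemma multG: "cl u \<otimes>\<^bsub>G\<^esub> cl v = cl (u @ v)" by (simp add: Gamma_def mult_cls)
lemma invG: "inv\<^bsub>G\<^esub> (cl w) = cl (inv_word w)" by (simp add: Gamma_def inv_cls)
lemma powG: "cl w [^]\<^bsub>G\<^esub> (k::nat) = cl (pow_word w k)" by (simp add: Gamma_def pow_cls)
lemma oneG: "\<one>\<^bsub>G\<^esub> = cl []" by (simp add: Gamma_def one_pg)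

lemma s_def': "gen_s n = cl s_word" by (simp add: gen_s_def cls_def)
lemma x_def': "gen_x n = cl x_word" by (simp add: gen_x_def cls_def)

abbreviation "s \<equiv> gen_s n"
abbreviation "x \<equiv> gen_x n"

lemma s_in [simp]: "s \<in> carrier G" by (simp add: s_def')
lemma x_in [simp]: "x \<in> carrier G" by (simp add: x_def')

definition E :: "word set \<Rightarrow> hel" where "E A = ev n (SOME w. w \<in> A)"

lemma E_cl: "E (cl w) = ev n w"
proof -
  have "(SOME w'. w' \<in> cl w) \<in> cl w" by (rule someI[of _ w]) (rule in_cls)
  then have "word_eqv (rels n) w (SOME w'. w' \<in> cl w)" by (simp add: mem_cls)
  then show ?thesis unfolding E_def by (simp add: ev_eqv)
qed

lemma E_mult: "A \<in> carrier G \<Longrightarrow> B \<in> carrier G \<Longrightarrow> E (A \<otimes>\<^bsub>G\<^esub> B) = hm (E A) (E B)"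
  by (auto simp: carrierG multG E_cl ev_append)

lemma E_inv: "A \<in> carrier G \<Longrightarrow> E (inv\<^bsub>G\<^esub> A) = hinv (E A)"
  by (auto simp: carrierG invG E_cl ev_inv)

lemma E_one: "E \<one>\<^bsub>G\<^esub> = he" by (simp add: oneG E_cl)

lemma E_s: "E s = (\<lambda>_. 0, 1)" by (simp add: s_def' E_cl ev_s)
lemma E_x: "E x = (Xf n, 0)" by (simp add: x_def' E_cl ev_x)

lemma good_scale: "good n p \<Longrightarrow> good n (\<lambda>j. k * fst p j, k * snd p)"
  unfolding good_def by (metis fst_conv snd_conv dvd_mult)

lemma E_pow_nat: assumes A: "A \<in> carrier G" and g: "good n (E A)"
  shows "E (A [^]\<^bsub>G\<^esub> (m::nat)) = (\<lambda>j. int m * fst (E A) j, int m * snd (E A))"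
proof (induction m)
  case 0 then show ?case by (simp add: E_one he_def)
next
  case (Suc m)
  have "E (A [^]\<^bsub>G\<^esub> Suc m) = hm (E (A [^]\<^bsub>G\<^esub> m)) (E A)" using A by (simp add: E_mult)
  also have "\<dots> = (\<lambda>j. int (Suc m) * fst (E A) j, int (Suc m) * snd (E A))"
    unfolding Suc using good_hm[OF good_scale[OF g] g] by (simp add: algebra_simps)
  finally show ?case .
qed

lemma E_pow_int: assumes A: "A \<in> carrier G" and g: "good n (E A)"
  shows "E (A [^]\<^bsub>G\<^esub> (k::int)) = (\<lambda>j. k * fst (E A) j, k * snd (E A))"
proof (cases "k < 0")
  case True
  have "A [^]\<^bsub>G\<^esub> k = inv\<^bsub>G\<^esub> (A [^]\<^bsub>G\<^esub> nat (- k))" using True by (subst int_pow_def2) simp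
  then have "E (A [^]\<^bsub>G\<^esub> k) = hinv (\<lambda>j. int (nat (- k)) * fst (E A) j, int (nat (- k)) * snd (E A))"
    using A g by (simp add: E_inv E_pow_nat)
  also have "\<dots> = (\<lambda>j. k * fst (E A) j, k * snd (E A))"
    using good_hinv[OF good_scale[OF g, of "int (nat (- k))"]] True by simp
  finally show ?thesis .
next
  case False
  have "A [^]\<^bsub>G\<^esub> k = A [^]\<^bsub>G\<^esub> nat k" using False by (subst int_pow_def2) simp
  then have "E (A [^]\<^bsub>G\<^esub> k) = (\<lambda>j. int (nat k) * fst (E A) j, int (nat k) * snd (E A))"
    using E_pow_nat[OF A g, of "nat k"] by simp
  then show ?thesis using False by simp
qed

lemma E_spow_nat: "E (s [^]\<^bsub>G\<^esub> (m::nat)) = (\<lambda>_. 0, int m)"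
  by (simp add: s_def' powG E_cl ev_pow_s)

lemma E_spow: "E (s [^]\<^bsub>G\<^esub> (k::int)) = (\<lambda>_. 0, k)"
proof (cases "k < 0")
  case True
  have "s [^]\<^bsub>G\<^esub> k = inv\<^bsub>G\<^esub> (s [^]\<^bsub>G\<^esub> nat (- k))" using True by (subst int_pow_def2) simp
  then have "E (s [^]\<^bsub>G\<^esub> k) = hinv (E (s [^]\<^bsub>G\<^esub> nat (- k)))" by (simp only: E_inv s_in G.nat_pow_closed)
  also have "\<dots> = hinv (\<lambda>_. 0, int (nat (- k)))" by (simp only: E_spow_nat)
  finally show ?thesis using True by (simp add: hinv_def)
next
  case False
  have "s [^]\<^bsub>G\<^esub> k = s [^]\<^bsub>G\<^esub> nat k" using False by (subst int_pow_def2) simp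
  then have "E (s [^]\<^bsub>G\<^esub> k) = (\<lambda>_. 0, int (nat k))" by (simp only: E_spow_nat)
  then show ?thesis using False by simp
qed

definition c :: "word set" where "c = s [^]\<^bsub>G\<^esub> n"
definition xi :: "int \<Rightarrow> word set" where "xi k = s [^]\<^bsub>G\<^esub> k \<otimes>\<^bsub>G\<^esub> x \<otimes>\<^bsub>G\<^esub> inv\<^bsub>G\<^esub> (s [^]\<^bsub>G\<^esub> k)"

lemma c_in [simp]: "c \<in> carrier G" by (simp add: c_def)
lemma xi_in [simp]: "xi k \<in> carrier G" by (simp add: xi_def)

lemma E_c: "E c = (\<lambda>_. 0, int n)" by (simp add: c_def E_spow_nat)
lemma E_xi: "E (xi k) = (\<lambda>j. Xf n (j - k), 0)"
  by (simp add: xi_def E_mult E_inv E_spow E_x hm_def hinv_def)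

end



context gam
begin

lemma cl_comm: "cl (comm_word a b) = cl a \<otimes>\<^bsub>G\<^esub> (cl b \<otimes>\<^bsub>G\<^esub> (inv\<^bsub>G\<^esub> cl a \<otimes>\<^bsub>G\<^esub> inv\<^bsub>G\<^esub> cl b))"
  by (simp add: comm_word_def multG invG)

lemma rel_comm: "comm_word a b \<in> rels n \<Longrightarrow> cl a \<otimes>\<^bsub>G\<^esub> cl b = cl b \<otimes>\<^bsub>G\<^esub> cl a"
proof (rule G.comm_from)
  assume r: "comm_word a b \<in> rels n"
  show "cl a \<otimes>\<^bsub>G\<^esub> (cl b \<otimes>\<^bsub>G\<^esub> (inv\<^bsub>G\<^esub> cl a \<otimes>\<^bsub>G\<^esub> inv\<^bsub>G\<^esub> cl b)) = \<one>\<^bsub>G\<^esub>"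
    unfolding cl_comm[symmetric] using rel_cls[OF r] by (simp add: Gamma_def)
qed simp_all

lemma c_x: "c \<otimes>\<^bsub>G\<^esub> x = x \<otimes>\<^bsub>G\<^esub> c"
proof -
  have "comm_word (pow_word s_word n) x_word \<in> rels n" by (simp add: rels_def)
  then show ?thesis using rel_comm by (simp add: c_def s_def' x_def' powG)
qed

lemma x_xi: assumes "1 \<le> d" "d \<le> n - 1" shows "x \<otimes>\<^bsub>G\<^esub> xi (int d) = xi (int d) \<otimes>\<^bsub>G\<^esub> x"
proof -
  have "comm_word x_word (pow_word s_word d @ x_word @ inv_word (pow_word s_word d)) \<in> rels n"
    using assms by (auto simp: rels_def)
  then have "x \<otimes>\<^bsub>G\<^esub> cl (pow_word s_word d @ x_word @ inv_word (pow_word s_word d))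
      = cl (pow_word s_word d @ x_word @ inv_word (pow_word s_word d)) \<otimes>\<^bsub>G\<^esub> x"
    using rel_comm by (simp add: x_def')
  moreover have "cl (pow_word s_word d @ x_word @ inv_word (pow_word s_word d)) = xi (int d)"
    by (simp add: xi_def int_pow_int s_def' x_def' powG invG multG G.m_assoc)
  ultimately show ?thesis by simp
qed

lemma c_s: "c \<otimes>\<^bsub>G\<^esub> s = s \<otimes>\<^bsub>G\<^esub> c"
  unfolding c_def using G.nat_pow_Suc2[of s n] by simp

lemma cl_single: "cl [a] \<in> {s, x, inv\<^bsub>G\<^esub> s, inv\<^bsub>G\<^esub> x}"
proof -
  obtain g b where a: "a = (g, b)" by (cases a)
  show ?thesis
    by (cases g; cases b) (simp_all add: a s_def' x_def' invG s_word_def x_word_def inv_word_def inv_letter_def)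
qed

lemma c_central: "y \<in> carrier G \<Longrightarrow> c \<otimes>\<^bsub>G\<^esub> y = y \<otimes>\<^bsub>G\<^esub> c"
proof -
  assume "y \<in> carrier G"
  then obtain w where y: "y = cl w" by (auto simp: carrierG)
  have "c \<otimes>\<^bsub>G\<^esub> cl w = cl w \<otimes>\<^bsub>G\<^esub> c"
  proof (induction w)
    case Nil then show ?case by (simp add: oneG[symmetric])
  next
    case (Cons a w)
    have ca: "c \<otimes>\<^bsub>G\<^esub> cl [a] = cl [a] \<otimes>\<^bsub>G\<^esub> c"
    proof -
      have "cl [a] = s \<or> cl [a] = x \<or> cl [a] = inv\<^bsub>G\<^esub> s \<or> cl [a] = inv\<^bsub>G\<^esub> x"
        using cl_single[of a] by simp
      then show ?thesis
        using c_s c_x G.comm_inv[OF c_in s_in c_s] G.comm_inv[OF c_in x_in c_x]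
        by (elim disjE) simp_all
    qed
    have "cl (a # w) = cl [a] \<otimes>\<^bsub>G\<^esub> cl w" by (simp add: multG)
    then show ?case using G.comm_mult[OF c_in cl_in cl_in ca Cons] by simp
  qed
  then show ?thesis using y by simp
qed

lemma invc_central: "y \<in> carrier G \<Longrightarrow> inv\<^bsub>G\<^esub> c \<otimes>\<^bsub>G\<^esub> y = y \<otimes>\<^bsub>G\<^esub> inv\<^bsub>G\<^esub> c"
  using G.comm_inv2[OF c_in _ c_central] by simp

lemma xi_conj: "s [^]\<^bsub>G\<^esub> i \<otimes>\<^bsub>G\<^esub> xi k \<otimes>\<^bsub>G\<^esub> inv\<^bsub>G\<^esub> (s [^]\<^bsub>G\<^esub> i) = xi (i + k)"
  by (simp add: xi_def G.int_pow_mult G.inv_mult_group G.m_assoc)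

lemma xi0: "xi 0 = x" by (simp add: xi_def)

lemma xi_comm: assumes "1 \<le> j - i" "j - i \<le> int n - 1"
  shows "xi i \<otimes>\<^bsub>G\<^esub> xi j = xi j \<otimes>\<^bsub>G\<^esub> xi i"
proof -
  define d where "d = nat (j - i)"
  have d: "1 \<le> d" "d \<le> n - 1" "int d = j - i" using assms n12 by (auto simp: d_def)
  have 1: "xi i = s [^]\<^bsub>G\<^esub> i \<otimes>\<^bsub>G\<^esub> x \<otimes>\<^bsub>G\<^esub> inv\<^bsub>G\<^esub> (s [^]\<^bsub>G\<^esub> i)"
    using xi_conj[of i 0] by (simp add: xi0)
  have 2: "xi j = s [^]\<^bsub>G\<^esub> i \<otimes>\<^bsub>G\<^esub> xi (int d) \<otimes>\<^bsub>G\<^esub> inv\<^bsub>G\<^esub> (s [^]\<^bsub>G\<^esub> i)"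
    using xi_conj[of i "int d"] d(3) by simp
  show ?thesis unfolding 1 2 using x_xi[OF d(1) d(2)]
    by (simp add: G.conj_mult)
qed

lemma shift_pos: assumes "k \<le> n" "y \<in> carrier G"
  shows "s [^]\<^bsub>G\<^esub> k \<otimes>\<^bsub>G\<^esub> (y \<otimes>\<^bsub>G\<^esub> s [^]\<^bsub>G\<^esub> (n - k))
    = (s [^]\<^bsub>G\<^esub> (int k) \<otimes>\<^bsub>G\<^esub> y \<otimes>\<^bsub>G\<^esub> inv\<^bsub>G\<^esub> (s [^]\<^bsub>G\<^esub> (int k))) \<otimes>\<^bsub>G\<^esub> c"
proof -
  have "s [^]\<^bsub>G\<^esub> (n - k) = s [^]\<^bsub>G\<^esub> (int n - int k)" using assms(1) by (simp add: int_pow_int[symmetric] of_nat_diff)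
  moreover have "c = s [^]\<^bsub>G\<^esub> (int n)" by (simp add: c_def int_pow_int)
  ultimately show ?thesis using G.shift_lemma[OF s_in assms(2), of "int k" "int n"] by (simp add: int_pow_int)
qed

lemma shift_neg: assumes "k \<le> n" "y \<in> carrier G"
  shows "(inv\<^bsub>G\<^esub> s) [^]\<^bsub>G\<^esub> k \<otimes>\<^bsub>G\<^esub> (y \<otimes>\<^bsub>G\<^esub> (inv\<^bsub>G\<^esub> s) [^]\<^bsub>G\<^esub> (n - k))
    = (s [^]\<^bsub>G\<^esub> (- int k) \<otimes>\<^bsub>G\<^esub> y \<otimes>\<^bsub>G\<^esub> inv\<^bsub>G\<^esub> (s [^]\<^bsub>G\<^esub> (- int k))) \<otimes>\<^bsub>G\<^esub> inv\<^bsub>G\<^esub> c"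
proof -
  have e: "(inv\<^bsub>G\<^esub> s) [^]\<^bsub>G\<^esub> (m::nat) = s [^]\<^bsub>G\<^esub> (- int m)" for m
    by (simp add: G.nat_pow_inv G.int_pow_neg_int)
  have "- int (n - k) = (- int n) - (- int k)" using assms(1) by (simp add: of_nat_diff)
  moreover have "inv\<^bsub>G\<^esub> c = s [^]\<^bsub>G\<^esub> (- int n)" by (simp add: c_def G.int_pow_neg_int)
  ultimately show ?thesis unfolding e using G.shift_lemma[OF s_in assms(2), of "- int k" "- int n"] by simp
qed

end



context gam
begin

lemma pos1: assumes "a \<in> S" "0 < m" "a \<in> carrier G" shows "pos_word_rep G S (a [^]\<^bsub>G\<^esub> (m::nat))"
  unfolding pos_word_rep_def
  by (rule exI[of _ "[a]"], rule exI[of _ "[m]"]) (use assms in \<open>simp add: G.nat_pow_closed\<close>)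

lemma pos1_carrier: "a \<in> carrier G \<Longrightarrow> a [^]\<^bsub>G\<^esub> m \<otimes>\<^bsub>G\<^esub> \<one>\<^bsub>G\<^esub> = a [^]\<^bsub>G\<^esub> (m::nat)" by simp

lemma pos3: assumes "a \<in> carrier G" "b \<in> carrier G" "a \<noteq> b" "a \<in> S" "b \<in> S" "0 < m1" "0 < m3"
  shows "pos_word_rep G S (a [^]\<^bsub>G\<^esub> (m1::nat) \<otimes>\<^bsub>G\<^esub> (b \<otimes>\<^bsub>G\<^esub> a [^]\<^bsub>G\<^esub> (m3::nat)))"
proof -
  have fold: "foldr (\<lambda>(y, m) acc. y [^]\<^bsub>G\<^esub> m \<otimes>\<^bsub>G\<^esub> acc) (zip [a, b, a] [m1, 1, m3]) \<one>\<^bsub>G\<^esub>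
      = a [^]\<^bsub>G\<^esub> m1 \<otimes>\<^bsub>G\<^esub> (b \<otimes>\<^bsub>G\<^esub> a [^]\<^bsub>G\<^esub> m3)"
    using assms(1,2) by simp
  have nb: "\<forall>i. Suc i < length [a, b, a] \<longrightarrow> [a, b, a] ! i \<noteq> [a, b, a] ! Suc i"
  proof (intro allI impI)
    fix i assume "Suc i < length [a, b, a]"
    then have "i = 0 \<or> i = 1" by auto
    then show "[a, b, a] ! i \<noteq> [a, b, a] ! Suc i" using assms(3) by auto
  qed
  show ?thesis unfolding pos_word_rep_def
    by (rule exI[of _ "[a, b, a]"], rule exI[of _ "[m1, 1, m3]"]) (use assms fold nb in simp)
qed

lemma s_ne_x: "s \<noteq> x"
proof
  assume "s = x" then have "E s = E x" by simp
  then show False by (simp add: E_s E_x)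
qed

lemma invs_ne_x: "inv\<^bsub>G\<^esub> s \<noteq> x"
proof
  assume "inv\<^bsub>G\<^esub> s = x" then have "E (inv\<^bsub>G\<^esub> s) = E x" by simp
  then show False by (simp add: E_inv E_s E_x hinv_def)
qed

lemma s_ne_invx: "s \<noteq> inv\<^bsub>G\<^esub> x"
proof
  assume "s = inv\<^bsub>G\<^esub> x" then have "E s = E (inv\<^bsub>G\<^esub> x)" by simp
  then show False by (simp add: E_inv E_s E_x hinv_def)
qed

lemma invs_ne_invx: "inv\<^bsub>G\<^esub> s \<noteq> inv\<^bsub>G\<^esub> x"
proof
  assume "inv\<^bsub>G\<^esub> s = inv\<^bsub>G\<^esub> x" then have "E (inv\<^bsub>G\<^esub> s) = E (inv\<^bsub>G\<^esub> x)" by simp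
  then show False by (simp add: E_inv E_s E_x hinv_def)
qed

definition "f1 = c"
definition "f2 = x"
definition "f3 = xi 1 \<otimes>\<^bsub>G\<^esub> c"
definition "f4 = xi 2 \<otimes>\<^bsub>G\<^esub> c"
definition "g2 = xi (-1) \<otimes>\<^bsub>G\<^esub> inv\<^bsub>G\<^esub> c"
definition "g3 = inv\<^bsub>G\<^esub> (xi 1) \<otimes>\<^bsub>G\<^esub> c"
definition "g4 = inv\<^bsub>G\<^esub> (xi (-2)) \<otimes>\<^bsub>G\<^esub> inv\<^bsub>G\<^esub> c"

lemma fam_in [simp]: "f1 \<in> carrier G" "f2 \<in> carrier G" "f3 \<in> carrier G" "f4 \<in> carrier G"
  "g2 \<in> carrier G" "g3 \<in> carrier G" "g4 \<in> carrier G"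
  by (simp_all add: f1_def f2_def f3_def f4_def g2_def g3_def g4_def)

lemma f3_word: "s [^]\<^bsub>G\<^esub> (1::nat) \<otimes>\<^bsub>G\<^esub> (x \<otimes>\<^bsub>G\<^esub> s [^]\<^bsub>G\<^esub> (n - 1)) = f3"
  using shift_pos[of 1 x] n12 by (simp add: f3_def xi_def)

lemma f4_word: "s [^]\<^bsub>G\<^esub> (2::nat) \<otimes>\<^bsub>G\<^esub> (x \<otimes>\<^bsub>G\<^esub> s [^]\<^bsub>G\<^esub> (n - 2)) = f4"
  using shift_pos[of 2 x] n12 by (simp add: f4_def xi_def)

lemma g2_word: "(inv\<^bsub>G\<^esub> s) [^]\<^bsub>G\<^esub> (1::nat) \<otimes>\<^bsub>G\<^esub> (x \<otimes>\<^bsub>G\<^esub> (inv\<^bsub>G\<^esub> s) [^]\<^bsub>G\<^esub> (n - 1)) = g2"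
  using shift_neg[of 1 x] n12 by (simp add: g2_def xi_def)

lemma g3_word: "s [^]\<^bsub>G\<^esub> (1::nat) \<otimes>\<^bsub>G\<^esub> (inv\<^bsub>G\<^esub> x \<otimes>\<^bsub>G\<^esub> s [^]\<^bsub>G\<^esub> (n - 1)) = g3"
  using shift_pos[of 1 "inv\<^bsub>G\<^esub> x"] n12 by (simp add: g3_def xi_def G.conj_inv)

lemma g4_word: "(inv\<^bsub>G\<^esub> s) [^]\<^bsub>G\<^esub> (2::nat) \<otimes>\<^bsub>G\<^esub> (inv\<^bsub>G\<^esub> x \<otimes>\<^bsub>G\<^esub> (inv\<^bsub>G\<^esub> s) [^]\<^bsub>G\<^esub> (n - 2)) = g4"
  using shift_neg[of 2 "inv\<^bsub>G\<^esub> x"] n12 by (simp add: g4_def xi_def G.conj_inv)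

end



context gam
begin

lemma pair_comm:
  assumes a: "a \<in> carrier G" and b: "b \<in> carrier G" and ab: "a \<otimes>\<^bsub>G\<^esub> b = b \<otimes>\<^bsub>G\<^esub> a"
    and z: "z \<in> carrier G" "\<And>y. y \<in> carrier G \<Longrightarrow> z \<otimes>\<^bsub>G\<^esub> y = y \<otimes>\<^bsub>G\<^esub> z"
    and z': "z' \<in> carrier G" "\<And>y. y \<in> carrier G \<Longrightarrow> z' \<otimes>\<^bsub>G\<^esub> y = y \<otimes>\<^bsub>G\<^esub> z'"
  shows "(a \<otimes>\<^bsub>G\<^esub> z) \<otimes>\<^bsub>G\<^esub> (b \<otimes>\<^bsub>G\<^esub> z') = (b \<otimes>\<^bsub>G\<^esub> z') \<otimes>\<^bsub>G\<^esub> (a \<otimes>\<^bsub>G\<^esub> z)"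
proof -
  have zb: "z \<otimes>\<^bsub>G\<^esub> b = b \<otimes>\<^bsub>G\<^esub> z" using z(2)[OF b] .
  have z'a: "z' \<otimes>\<^bsub>G\<^esub> a = a \<otimes>\<^bsub>G\<^esub> z'" using z'(2)[OF a] .
  have zz: "z \<otimes>\<^bsub>G\<^esub> z' = z' \<otimes>\<^bsub>G\<^esub> z" using z(2)[OF z'(1)] .
  have "(a \<otimes>\<^bsub>G\<^esub> z) \<otimes>\<^bsub>G\<^esub> (b \<otimes>\<^bsub>G\<^esub> z') = a \<otimes>\<^bsub>G\<^esub> ((z \<otimes>\<^bsub>G\<^esub> b) \<otimes>\<^bsub>G\<^esub> z')"
    using a b z(1) z'(1) by (simp add: G.m_assoc)
  also have "\<dots> = (a \<otimes>\<^bsub>G\<^esub> b) \<otimes>\<^bsub>G\<^esub> (z \<otimes>\<^bsub>G\<^esub> z')"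
    unfolding zb using a b z(1) z'(1) by (simp add: G.m_assoc)
  also have "\<dots> = (b \<otimes>\<^bsub>G\<^esub> a) \<otimes>\<^bsub>G\<^esub> (z' \<otimes>\<^bsub>G\<^esub> z)" unfolding ab zz ..
  also have "\<dots> = b \<otimes>\<^bsub>G\<^esub> ((z' \<otimes>\<^bsub>G\<^esub> a) \<otimes>\<^bsub>G\<^esub> z)"
    unfolding z'a using a b z(1) z'(1) by (simp add: G.m_assoc)
  also have "\<dots> = (b \<otimes>\<^bsub>G\<^esub> z') \<otimes>\<^bsub>G\<^esub> (a \<otimes>\<^bsub>G\<^esub> z)"
    using a b z(1) z'(1) by (simp add: G.m_assoc)
  finally show ?thesis .
qed

lemma invc_in [simp]: "inv\<^bsub>G\<^esub> c \<in> carrier G" by simp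

lemmas cz = c_in c_central
lemmas icz = invc_in invc_central

lemma xi_m1_1: "xi (-1) \<otimes>\<^bsub>G\<^esub> xi 1 = xi 1 \<otimes>\<^bsub>G\<^esub> xi (-1)" using n12 by (intro xi_comm) auto
lemma xi_m2_m1: "xi (-2) \<otimes>\<^bsub>G\<^esub> xi (-1) = xi (-1) \<otimes>\<^bsub>G\<^esub> xi (-2)" using n12 by (intro xi_comm) auto
lemma xi_m2_1: "xi (-2) \<otimes>\<^bsub>G\<^esub> xi 1 = xi 1 \<otimes>\<^bsub>G\<^esub> xi (-2)" using n12 by (intro xi_comm) auto
lemma xi_0_1: "xi 0 \<otimes>\<^bsub>G\<^esub> xi 1 = xi 1 \<otimes>\<^bsub>G\<^esub> xi 0" using n12 by (intro xi_comm) auto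
lemma xi_0_2: "xi 0 \<otimes>\<^bsub>G\<^esub> xi 2 = xi 2 \<otimes>\<^bsub>G\<^esub> xi 0" using n12 by (intro xi_comm) auto
lemma xi_1_2: "xi 1 \<otimes>\<^bsub>G\<^esub> xi 2 = xi 2 \<otimes>\<^bsub>G\<^esub> xi 1" using n12 by (intro xi_comm) auto

lemma f_comm:
  "f1 \<otimes>\<^bsub>G\<^esub> f2 = f2 \<otimes>\<^bsub>G\<^esub> f1" "f1 \<otimes>\<^bsub>G\<^esub> f3 = f3 \<otimes>\<^bsub>G\<^esub> f1" "f1 \<otimes>\<^bsub>G\<^esub> f4 = f4 \<otimes>\<^bsub>G\<^esub> f1"
  "f2 \<otimes>\<^bsub>G\<^esub> f3 = f3 \<otimes>\<^bsub>G\<^esub> f2" "f2 \<otimes>\<^bsub>G\<^esub> f4 = f4 \<otimes>\<^bsub>G\<^esub> f2" "f3 \<otimes>\<^bsub>G\<^esub> f4 = f4 \<otimes>\<^bsub>G\<^esub> f3"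
proof -
  show "f1 \<otimes>\<^bsub>G\<^esub> f2 = f2 \<otimes>\<^bsub>G\<^esub> f1" "f1 \<otimes>\<^bsub>G\<^esub> f3 = f3 \<otimes>\<^bsub>G\<^esub> f1" "f1 \<otimes>\<^bsub>G\<^esub> f4 = f4 \<otimes>\<^bsub>G\<^esub> f1"
    unfolding f1_def using fam_in by (simp_all add: c_central)
  show "f2 \<otimes>\<^bsub>G\<^esub> f3 = f3 \<otimes>\<^bsub>G\<^esub> f2"
    unfolding f2_def f3_def using G.comm_mult[OF x_in xi_in c_in xi_0_1[unfolded xi0] c_central[OF x_in, symmetric]] .
  show "f2 \<otimes>\<^bsub>G\<^esub> f4 = f4 \<otimes>\<^bsub>G\<^esub> f2"
    unfolding f2_def f4_def using G.comm_mult[OF x_in xi_in c_in xi_0_2[unfolded xi0] c_central[OF x_in, symmetric]] .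
  show "f3 \<otimes>\<^bsub>G\<^esub> f4 = f4 \<otimes>\<^bsub>G\<^esub> f3"
    unfolding f3_def f4_def by (rule pair_comm[OF xi_in xi_in xi_1_2 cz cz])
qed

lemma g_comm:
  "f1 \<otimes>\<^bsub>G\<^esub> g2 = g2 \<otimes>\<^bsub>G\<^esub> f1" "f1 \<otimes>\<^bsub>G\<^esub> g3 = g3 \<otimes>\<^bsub>G\<^esub> f1" "f1 \<otimes>\<^bsub>G\<^esub> g4 = g4 \<otimes>\<^bsub>G\<^esub> f1"
  "g2 \<otimes>\<^bsub>G\<^esub> g3 = g3 \<otimes>\<^bsub>G\<^esub> g2" "g2 \<otimes>\<^bsub>G\<^esub> g4 = g4 \<otimes>\<^bsub>G\<^esub> g2" "g3 \<otimes>\<^bsub>G\<^esub> g4 = g4 \<otimes>\<^bsub>G\<^esub> g3"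
proof -
  show "f1 \<otimes>\<^bsub>G\<^esub> g2 = g2 \<otimes>\<^bsub>G\<^esub> f1" "f1 \<otimes>\<^bsub>G\<^esub> g3 = g3 \<otimes>\<^bsub>G\<^esub> f1" "f1 \<otimes>\<^bsub>G\<^esub> g4 = g4 \<otimes>\<^bsub>G\<^esub> f1"
    unfolding f1_def using fam_in by (simp_all add: c_central)
  have 1: "xi (-1) \<otimes>\<^bsub>G\<^esub> inv\<^bsub>G\<^esub> (xi 1) = inv\<^bsub>G\<^esub> (xi 1) \<otimes>\<^bsub>G\<^esub> xi (-1)"
    by (rule G.comm_inv[OF xi_in xi_in xi_m1_1])
  show "g2 \<otimes>\<^bsub>G\<^esub> g3 = g3 \<otimes>\<^bsub>G\<^esub> g2"
    unfolding g2_def g3_def by (rule pair_comm[OF xi_in G.inv_closed[OF xi_in] 1 icz cz])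
  have 2: "xi (-1) \<otimes>\<^bsub>G\<^esub> inv\<^bsub>G\<^esub> (xi (-2)) = inv\<^bsub>G\<^esub> (xi (-2)) \<otimes>\<^bsub>G\<^esub> xi (-1)"
    by (rule G.comm_inv[OF xi_in xi_in xi_m2_m1[symmetric]])
  show "g2 \<otimes>\<^bsub>G\<^esub> g4 = g4 \<otimes>\<^bsub>G\<^esub> g2"
    unfolding g2_def g4_def by (rule pair_comm[OF xi_in G.inv_closed[OF xi_in] 2 icz icz])
  have 3: "xi 1 \<otimes>\<^bsub>G\<^esub> inv\<^bsub>G\<^esub> (xi (-2)) = inv\<^bsub>G\<^esub> (xi (-2)) \<otimes>\<^bsub>G\<^esub> xi 1"
    by (rule G.comm_inv[OF xi_in xi_in xi_m2_1[symmetric]])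
  have 4: "inv\<^bsub>G\<^esub> (xi 1) \<otimes>\<^bsub>G\<^esub> inv\<^bsub>G\<^esub> (xi (-2)) = inv\<^bsub>G\<^esub> (xi (-2)) \<otimes>\<^bsub>G\<^esub> inv\<^bsub>G\<^esub> (xi 1)"
    by (rule G.comm_inv2[OF xi_in G.inv_closed[OF xi_in] 3])
  show "g3 \<otimes>\<^bsub>G\<^esub> g4 = g4 \<otimes>\<^bsub>G\<^esub> g3"
    unfolding g3_def g4_def by (rule pair_comm[OF G.inv_closed[OF xi_in] G.inv_closed[OF xi_in] 4 cz icz])
qed

end



context gam
begin

lemma sub_Z4:
  assumes h: "h1 \<in> carrier G" "h2 \<in> carrier G" "h3 \<in> carrier G" "h4 \<in> carrier G"
    and c12: "h1 \<otimes>\<^bsub>G\<^esub> h2 = h2 \<otimes>\<^bsub>G\<^esub> h1" and c13: "h1 \<otimes>\<^bsub>G\<^esub> h3 = h3 \<otimes>\<^bsub>G\<^esub> h1"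
    and c14: "h1 \<otimes>\<^bsub>G\<^esub> h4 = h4 \<otimes>\<^bsub>G\<^esub> h1" and c23: "h2 \<otimes>\<^bsub>G\<^esub> h3 = h3 \<otimes>\<^bsub>G\<^esub> h2"
    and c24: "h2 \<otimes>\<^bsub>G\<^esub> h4 = h4 \<otimes>\<^bsub>G\<^esub> h2" and c34: "h3 \<otimes>\<^bsub>G\<^esub> h4 = h4 \<otimes>\<^bsub>G\<^esub> h3"
    and inj: "\<And>a1 a2 a3 a4 b1 b2 b3 b4.
      h1 [^]\<^bsub>G\<^esub> (a1::int) \<otimes>\<^bsub>G\<^esub> h2 [^]\<^bsub>G\<^esub> (a2::int) \<otimes>\<^bsub>G\<^esub> h3 [^]\<^bsub>G\<^esub> (a3::int) \<otimes>\<^bsub>G\<^esub> h4 [^]\<^bsub>G\<^esub> (a4::int)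
      = h1 [^]\<^bsub>G\<^esub> b1 \<otimes>\<^bsub>G\<^esub> h2 [^]\<^bsub>G\<^esub> b2 \<otimes>\<^bsub>G\<^esub> h3 [^]\<^bsub>G\<^esub> b3 \<otimes>\<^bsub>G\<^esub> h4 [^]\<^bsub>G\<^esub> b4
      \<Longrightarrow> a1 = b1 \<and> a2 = b2 \<and> a3 = b3 \<and> a4 = b4"
  shows "G\<lparr>carrier := generate G {h1, h2, h3, h4}\<rparr> \<cong> Z4"
proof -
  define F where "F = {h1, h2, h3, h4}"
  define K where "K = G\<lparr>carrier := generate G F\<rparr>"
  have F: "F \<subseteq> carrier G" using h by (auto simp: F_def)
  have sub: "subgroup (generate G F) G" by (rule G.generate_is_subgroup[OF F])
  have grpK: "group K" unfolding K_def by (rule G.subgroup_imp_group[OF sub])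
  have comm: "a \<otimes>\<^bsub>G\<^esub> b = b \<otimes>\<^bsub>G\<^esub> a" if "a \<in> F" "b \<in> F" for a b
    using that c12 c13 c14 c23 c24 c34 unfolding F_def by (elim insertE emptyE) simp_all
  have cK: "comm_group K"
  proof (rule group.group_comm_groupI[OF grpK])
    fix a b assume "a \<in> carrier K" "b \<in> carrier K"
    then show "a \<otimes>\<^bsub>K\<^esub> b = b \<otimes>\<^bsub>K\<^esub> a" unfolding K_def using G.generate_comm[OF F comm] by simp
  qed
  have hK: "h1 \<in> carrier K" "h2 \<in> carrier K" "h3 \<in> carrier K" "h4 \<in> carrier K"
    unfolding K_def F_def by (auto intro: generate.incl)
  have FH: "F \<subseteq> generate G F" by (auto intro: generate.incl)
  have gen: "carrier K \<subseteq> generate K {h1, h2, h3, h4}"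
    unfolding K_def using G.generate_consistent[OF FH sub] by (simp add: F_def)
  have pw: "\<And>y (k::int). y \<in> carrier K \<Longrightarrow> y [^]\<^bsub>K\<^esub> k = y [^]\<^bsub>G\<^esub> k"
    unfolding K_def using G.int_pow_consistent[OF sub] by simp
  have mK: "\<And>a b. a \<otimes>\<^bsub>K\<^esub> b = a \<otimes>\<^bsub>G\<^esub> b" unfolding K_def by simp
  have "K \<cong> Z4"
  proof (rule comm_group.Z4_iso[OF cK hK gen])
    fix a b c d a' b' c' d' :: int
    assume "h1 [^]\<^bsub>K\<^esub> a \<otimes>\<^bsub>K\<^esub> h2 [^]\<^bsub>K\<^esub> b \<otimes>\<^bsub>K\<^esub> h3 [^]\<^bsub>K\<^esub> c \<otimes>\<^bsub>K\<^esub> h4 [^]\<^bsub>K\<^esub> d =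
      h1 [^]\<^bsub>K\<^esub> a' \<otimes>\<^bsub>K\<^esub> h2 [^]\<^bsub>K\<^esub> b' \<otimes>\<^bsub>K\<^esub> h3 [^]\<^bsub>K\<^esub> c' \<otimes>\<^bsub>K\<^esub> h4 [^]\<^bsub>K\<^esub> d'"
    then show "a = a' \<and> b = b' \<and> c = c' \<and> d = d'"
      using inj by (simp only: mK pw hK)
  qed
  then show ?thesis unfolding K_def F_def .
qed

lemma Xf_eval: assumes "\<bar>t\<bar> < int n" shows "Xf n t = (if t = 0 then 1 else 0)"
proof (cases "t = 0")
  case False
  have "\<not> int n dvd t"
  proof
    assume "int n dvd t"
    then have "\<bar>int n\<bar> \<le> \<bar>t\<bar>" using False by (rule dvd_imp_le_int[rotated])
    then show False using assms by simp
  qed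
  then show ?thesis using False by (simp add: Xf_def)
qed (simp add: Xf_def)

lemma Xf_consts: "Xf n 0 = 1" "Xf n 1 = 0" "Xf n 2 = 0" "Xf n 3 = 0"
  "Xf n (-1) = 0" "Xf n (-2) = 0" "Xf n (-3) = 0"
  using n12 by (simp_all add: Xf_eval)

lemma Xf_per: "Xf n (j mod int n + k) = Xf n (j + k)" "Xf n (j mod int n - k) = Xf n (j - k)"
  by (simp_all add: Xf_def dvd_eq_mod_eq_0 mod_add_left_eq mod_diff_left_eq)

lemma E_fam:
  "E f1 = (\<lambda>_. 0, int n)" "E f2 = (Xf n, 0)"
  "E f3 = (\<lambda>j. Xf n (j - 1), int n)" "E f4 = (\<lambda>j. Xf n (j - 2), int n)"
  "E g2 = (\<lambda>j. Xf n (j + 1), - int n)" "E g3 = (\<lambda>j. - Xf n (j - 1), int n)"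
  "E g4 = (\<lambda>j. - Xf n (j + 2), - int n)"
  by (simp_all add: f1_def f2_def f3_def f4_def g2_def g3_def g4_def E_mult E_inv E_xi E_c E_x hm_def hinv_def)

lemma good_fam:
  "good n (E f1)" "good n (E f2)" "good n (E f3)" "good n (E f4)"
  "good n (E g2)" "good n (E g3)" "good n (E g4)"
  unfolding E_fam good_def fst_conv snd_conv by (simp_all add: Xf_per Xf_mod)

lemma good_sum: "good n p \<Longrightarrow> good n q \<Longrightarrow> good n (\<lambda>j. fst p j + fst q j, snd p + snd q)"
  using good_hm_good good_hm by metis

lemma E_phi:
  assumes h: "h1 \<in> carrier G" "h2 \<in> carrier G" "h3 \<in> carrier G" "h4 \<in> carrier G"
    and g: "good n (E h1)" "good n (E h2)" "good n (E h3)" "good n (E h4)"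
  shows "E (h1 [^]\<^bsub>G\<^esub> (a1::int) \<otimes>\<^bsub>G\<^esub> h2 [^]\<^bsub>G\<^esub> (a2::int) \<otimes>\<^bsub>G\<^esub> h3 [^]\<^bsub>G\<^esub> (a3::int) \<otimes>\<^bsub>G\<^esub> h4 [^]\<^bsub>G\<^esub> (a4::int))
    = (\<lambda>j. a1 * fst (E h1) j + a2 * fst (E h2) j + a3 * fst (E h3) j + a4 * fst (E h4) j,
       a1 * snd (E h1) + a2 * snd (E h2) + a3 * snd (E h3) + a4 * snd (E h4))"
proof -
  note gs = good_scale[OF g(1), of a1] good_scale[OF g(2), of a2] good_scale[OF g(3), of a3] good_scale[OF g(4), of a4]
  have 12: "E (h1 [^]\<^bsub>G\<^esub> a1 \<otimes>\<^bsub>G\<^esub> h2 [^]\<^bsub>G\<^esub> a2) =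
     (\<lambda>j. a1 * fst (E h1) j + a2 * fst (E h2) j, a1 * snd (E h1) + a2 * snd (E h2))"
    using h g good_hm[OF gs(1) gs(2)] by (simp add: E_mult E_pow_int)
  have g12: "good n (\<lambda>j. a1 * fst (E h1) j + a2 * fst (E h2) j, a1 * snd (E h1) + a2 * snd (E h2))"
    using good_sum[OF gs(1) gs(2)] by simp
  have 123: "E (h1 [^]\<^bsub>G\<^esub> a1 \<otimes>\<^bsub>G\<^esub> h2 [^]\<^bsub>G\<^esub> a2 \<otimes>\<^bsub>G\<^esub> h3 [^]\<^bsub>G\<^esub> a3) =
     (\<lambda>j. a1 * fst (E h1) j + a2 * fst (E h2) j + a3 * fst (E h3) j,
      a1 * snd (E h1) + a2 * snd (E h2) + a3 * snd (E h3))"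
    using h g good_hm[OF g12 gs(3)] by (simp add: E_mult E_pow_int 12)
  have g123: "good n (\<lambda>j. a1 * fst (E h1) j + a2 * fst (E h2) j + a3 * fst (E h3) j,
      a1 * snd (E h1) + a2 * snd (E h2) + a3 * snd (E h3))"
    using good_sum[OF g12 gs(3)] by simp
  show ?thesis
    using h g good_hm[OF g123 gs(4)] by (simp add: E_mult E_pow_int 123)
qed

end



context gam
begin

lemma f_inj:
  assumes e: "f1 [^]\<^bsub>G\<^esub> (a1::int) \<otimes>\<^bsub>G\<^esub> f2 [^]\<^bsub>G\<^esub> (a2::int) \<otimes>\<^bsub>G\<^esub> f3 [^]\<^bsub>G\<^esub> (a3::int) \<otimes>\<^bsub>G\<^esub> f4 [^]\<^bsub>G\<^esub> (a4::int)
      = f1 [^]\<^bsub>G\<^esub> b1 \<otimes>\<^bsub>G\<^esub> f2 [^]\<^bsub>G\<^esub> b2 \<otimes>\<^bsub>G\<^esub> f3 [^]\<^bsub>G\<^esub> b3 \<otimes>\<^bsub>G\<^esub> f4 [^]\<^bsub>G\<^esub> b4"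
  shows "a1 = b1 \<and> a2 = b2 \<and> a3 = b3 \<and> a4 = b4"
proof -
  have "E (f1 [^]\<^bsub>G\<^esub> a1 \<otimes>\<^bsub>G\<^esub> f2 [^]\<^bsub>G\<^esub> a2 \<otimes>\<^bsub>G\<^esub> f3 [^]\<^bsub>G\<^esub> a3 \<otimes>\<^bsub>G\<^esub> f4 [^]\<^bsub>G\<^esub> a4)
      = E (f1 [^]\<^bsub>G\<^esub> b1 \<otimes>\<^bsub>G\<^esub> f2 [^]\<^bsub>G\<^esub> b2 \<otimes>\<^bsub>G\<^esub> f3 [^]\<^bsub>G\<^esub> b3 \<otimes>\<^bsub>G\<^esub> f4 [^]\<^bsub>G\<^esub> b4)"
    using e by simp
  then have P: "(\<lambda>j. a1 * 0 + a2 * Xf n j + a3 * Xf n (j - 1) + a4 * Xf n (j - 2),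
       a1 * int n + a2 * 0 + a3 * int n + a4 * int n) =
     (\<lambda>j. b1 * 0 + b2 * Xf n j + b3 * Xf n (j - 1) + b4 * Xf n (j - 2),
       b1 * int n + b2 * 0 + b3 * int n + b4 * int n)"
    unfolding E_phi[OF fam_in(1-4) good_fam(1-4)] E_fam by simp
  have fj: "a2 * Xf n j + a3 * Xf n (j - 1) + a4 * Xf n (j - 2) = b2 * Xf n j + b3 * Xf n (j - 1) + b4 * Xf n (j - 2)" for j
    using fun_cong[OF arg_cong[OF P, of fst], of j] by simp
  have 2: "a2 = b2" using fj[of 0] by (simp add: Xf_consts)
  have 3: "a3 = b3" using fj[of 1] by (simp add: Xf_consts)
  have 4: "a4 = b4" using fj[of 2] by (simp add: Xf_consts)
  have "(a1 + a3 + a4) * int n = (b1 + b3 + b4) * int n" using arg_cong[OF P, of snd] by (simp add: algebra_simps)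
  then have "a1 + a3 + a4 = b1 + b3 + b4" using n12 by simp
  then have 1: "a1 = b1" using 3 4 by simp
  show ?thesis using 1 2 3 4 by simp
qed

lemma g_inj:
  assumes e: "f1 [^]\<^bsub>G\<^esub> (a1::int) \<otimes>\<^bsub>G\<^esub> g2 [^]\<^bsub>G\<^esub> (a2::int) \<otimes>\<^bsub>G\<^esub> g3 [^]\<^bsub>G\<^esub> (a3::int) \<otimes>\<^bsub>G\<^esub> g4 [^]\<^bsub>G\<^esub> (a4::int)
      = f1 [^]\<^bsub>G\<^esub> b1 \<otimes>\<^bsub>G\<^esub> g2 [^]\<^bsub>G\<^esub> b2 \<otimes>\<^bsub>G\<^esub> g3 [^]\<^bsub>G\<^esub> b3 \<otimes>\<^bsub>G\<^esub> g4 [^]\<^bsub>G\<^esub> b4"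
  shows "a1 = b1 \<and> a2 = b2 \<and> a3 = b3 \<and> a4 = b4"
proof -
  have "E (f1 [^]\<^bsub>G\<^esub> a1 \<otimes>\<^bsub>G\<^esub> g2 [^]\<^bsub>G\<^esub> a2 \<otimes>\<^bsub>G\<^esub> g3 [^]\<^bsub>G\<^esub> a3 \<otimes>\<^bsub>G\<^esub> g4 [^]\<^bsub>G\<^esub> a4)
      = E (f1 [^]\<^bsub>G\<^esub> b1 \<otimes>\<^bsub>G\<^esub> g2 [^]\<^bsub>G\<^esub> b2 \<otimes>\<^bsub>G\<^esub> g3 [^]\<^bsub>G\<^esub> b3 \<otimes>\<^bsub>G\<^esub> g4 [^]\<^bsub>G\<^esub> b4)"
    using e by simp
  then have P: "(\<lambda>j. a1 * 0 + a2 * Xf n (j + 1) + a3 * (- Xf n (j - 1)) + a4 * (- Xf n (j + 2)),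
       a1 * int n + a2 * (- int n) + a3 * int n + a4 * (- int n)) =
     (\<lambda>j. b1 * 0 + b2 * Xf n (j + 1) + b3 * (- Xf n (j - 1)) + b4 * (- Xf n (j + 2)),
       b1 * int n + b2 * (- int n) + b3 * int n + b4 * (- int n))"
    unfolding E_phi[OF fam_in(1) fam_in(5-7) good_fam(1) good_fam(5-7)] E_fam by simp
  have fj: "a2 * Xf n (j + 1) - a3 * Xf n (j - 1) - a4 * Xf n (j + 2) = b2 * Xf n (j + 1) - b3 * Xf n (j - 1) - b4 * Xf n (j + 2)" for j
    using fun_cong[OF arg_cong[OF P, of fst], of j] by simp
  have 2: "a2 = b2" using fj[of "-1"] by (simp add: Xf_consts)
  have 3: "a3 = b3" using fj[of 1] by (simp add: Xf_consts)
  have 4: "a4 = b4" using fj[of "-2"] by (simp add: Xf_consts)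
  have "(a1 - a2 + a3 - a4) * int n = (b1 - b2 + b3 - b4) * int n" using arg_cong[OF P, of snd] by (simp add: algebra_simps)
  then have "a1 - a2 + a3 - a4 = b1 - b2 + b3 - b4" using n12 by simp
  then have 1: "a1 = b1" using 2 3 4 by simp
  show ?thesis using 1 2 3 4 by simp
qed

lemma main:
  "\<exists>f g :: nat \<Rightarrow> word set.
           (\<forall>i\<in>{1..4}. f i \<in> carrier (Gamma n) \<and> g i \<in> carrier (Gamma n))
         \<and> (Gamma n)\<lparr>carrier := generate (Gamma n) (f ` {1..4})\<rparr> \<cong> Z4
         \<and> (Gamma n)\<lparr>carrier := generate (Gamma n) (g ` {1..4})\<rparr> \<cong> Z4
         \<and> (\<forall>i\<in>{1..4}. pos_word_rep (Gamma n) ((\<lambda>i::nat. if i = 1 then {gen_s n, gen_x n}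
                      else if i = 2 then {inv\<^bsub>Gamma n\<^esub> gen_s n, gen_x n}
                      else if i = 3 then {gen_s n, inv\<^bsub>Gamma n\<^esub> gen_x n}
                      else {inv\<^bsub>Gamma n\<^esub> gen_s n, inv\<^bsub>Gamma n\<^esub> gen_x n}) 1) (f i))
         \<and> (\<forall>i\<in>{1..4}. pos_word_rep (Gamma n) ((\<lambda>i::nat. if i = 1 then {gen_s n, gen_x n}
                      else if i = 2 then {inv\<^bsub>Gamma n\<^esub> gen_s n, gen_x n}
                      else if i = 3 then {gen_s n, inv\<^bsub>Gamma n\<^esub> gen_x n}
                      else {inv\<^bsub>Gamma n\<^esub> gen_s n, inv\<^bsub>Gamma n\<^esub> gen_x n}) i) (g i))"
proof -
  define ff :: "nat \<Rightarrow> word set" where "ff = (\<lambda>i. if i = 1 then f1 else if i = 2 then f2 else if i = 3 then f3 else f4)"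
  define gg :: "nat \<Rightarrow> word set" where "gg = (\<lambda>i. if i = 1 then f1 else if i = 2 then g2 else if i = 3 then g3 else g4)"
  have I: "{1..4::nat} = {1, 2, 3, 4}" by auto
  have cases4: "i = 1 \<or> i = 2 \<or> i = 3 \<or> i = 4" if "i \<in> {1..4::nat}" for i using that by auto
  have imf: "ff ` {1..4} = {f1, f2, f3, f4}" unfolding I ff_def by (simp add: insert_commute)
  have img: "gg ` {1..4} = {f1, g2, g3, g4}" unfolding I gg_def by (simp add: insert_commute)
  have car: "\<forall>i\<in>{1..4}. ff i \<in> carrier G \<and> gg i \<in> carrier G" by (simp add: ff_def gg_def)
  have isof: "G\<lparr>carrier := generate G (ff ` {1..4})\<rparr> \<cong> Z4"
    unfolding imf by (rule sub_Z4[OF fam_in(1-4) f_comm f_inj])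
  have isog: "G\<lparr>carrier := generate G (gg ` {1..4})\<rparr> \<cong> Z4"
    unfolding img by (rule sub_Z4[OF fam_in(1) fam_in(5-7) g_comm g_inj])
  have n0: "0 < n" "0 < n - 1" "0 < n - 2" "Suc 0 < n" "2 < n" using n12 by auto
  have p1: "pos_word_rep G {s, x} f1" unfolding f1_def c_def by (rule pos1) (simp_all add: n0)
  have p2: "pos_word_rep G {s, x} f2"
  proof -
    have "pos_word_rep G {s, x} (x [^]\<^bsub>G\<^esub> (1::nat))" by (rule pos1) simp_all
    then show ?thesis by (simp add: f2_def)
  qed
  have p3: "pos_word_rep G {s, x} f3" unfolding f3_word[symmetric]
    by (rule pos3) (simp_all add: n0 s_ne_x)
  have p4: "pos_word_rep G {s, x} f4" unfolding f4_word[symmetric]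
    by (rule pos3) (simp_all add: n0 s_ne_x)
  have q2: "pos_word_rep G {inv\<^bsub>G\<^esub> s, x} g2" unfolding g2_word[symmetric]
    by (rule pos3) (simp_all add: n0 invs_ne_x)
  have q3: "pos_word_rep G {s, inv\<^bsub>G\<^esub> x} g3" unfolding g3_word[symmetric]
    by (rule pos3) (simp_all add: n0 s_ne_invx)
  have q4: "pos_word_rep G {inv\<^bsub>G\<^esub> s, inv\<^bsub>G\<^esub> x} g4" unfolding g4_word[symmetric]
    by (rule pos3) (simp_all add: n0 invs_ne_invx)
  have pf: "\<forall>i\<in>{1..4}. pos_word_rep G {s, x} (ff i)"
    using cases4 p1 p2 p3 p4 unfolding ff_def by fastforce
  have pg: "\<forall>i\<in>{1..4}. pos_word_rep G ((\<lambda>i::nat. if i = 1 then {s, x}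
                      else if i = 2 then {inv\<^bsub>G\<^esub> s, x}
                      else if i = 3 then {s, inv\<^bsub>G\<^esub> x}
                      else {inv\<^bsub>G\<^esub> s, inv\<^bsub>G\<^esub> x}) i) (gg i)"
    using cases4 p1 q2 q3 q4 unfolding gg_def by fastforce
  show ?thesis
    apply (rule exI[of _ ff], rule exI[of _ gg])
    using car isof isog pf pg by simp
qed

end


theorem proposition1p5:
  fixes n :: nat
  assumes "n \<ge> 12"
  defines "G \<equiv> Gamma n"
  defines "s \<equiv> gen_s n" and "x \<equiv> gen_x n"
  defines "S \<equiv> (\<lambda>i::nat. if i = 1 then {s, x}
                      else if i = 2 then {inv\<^bsub>G\<^esub> s, x}
                      else if i = 3 then {s, inv\<^bsub>G\<^esub> x}
                      else {inv\<^bsub>G\<^esub> s, inv\<^bsub>G\<^esub> x})"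
  shows "\<exists>f g :: nat \<Rightarrow> word set.
           (\<forall>i\<in>{1..4}. f i \<in> carrier G \<and> g i \<in> carrier G)
         \<and> G\<lparr>carrier := generate G (f ` {1..4})\<rparr> \<cong> Z4
         \<and> G\<lparr>carrier := generate G (g ` {1..4})\<rparr> \<cong> Z4
         \<and> (\<forall>i\<in>{1..4}. pos_word_rep G (S 1) (f i))
         \<and> (\<forall>i\<in>{1..4}. pos_word_rep G (S i) (g i))"
proof -
  have gn: "gam n" by (rule gam.intro) (use assms(1) in simp)
  show ?thesis unfolding G_def s_def x_def S_def by (rule gam.main[OF gn])
qed

end
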